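(* There is an absolute constant $C$ such that for every $\epsilon\in(0,1]$ there is an $\epsilon$-edge differentially private algorithm which, given a graph $G$ on $n\ge3$ vertices, outputs a real number $\hat\rho$ with $|\hat\rho-\rho(G)|\le C\sqrt{\log(n)/\epsilon}$ with probability at least $1-1/n$.
   Context: For nonempty $S\subseteq V$, $\rho(S)=|E(S)|/|S|$ with $E(S)$ the edges inside $S$, and $\rho(G)=\max_{\emptyset\ne S\subseteq V}\rho(S)$. Edge-neighboring graphs have the same vertex set and edge sets differing in exactly one edge; an algorithm is $\epsilon$-edge DP if $\Pr[\mathcal A(G)\in O]\le e^\epsilon\Pr[\mathcal A(G')\in O]$ for all edge-neighboring $G,G'$ and all output sets $O$. $\log$ is the natural logarithm. *)

theory Defs
  imports "HOL-Probability.Probability"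
begin

definition all_edges :: "nat \<Rightarrow> nat set set" where
  "all_edges n = {e. \<exists>u v. e = {u, v} \<and> u \<noteq> v \<and> u < n \<and> v < n}"

definition is_graph :: "nat \<Rightarrow> nat set set \<Rightarrow> bool" where
  "is_graph n E \<longleftrightarrow> E \<subseteq> all_edges n"

definition induced_edges :: "nat set set \<Rightarrow> nat set \<Rightarrow> nat set set" where
  "induced_edges E S = {e \<in> E. e \<subseteq> S}"

definition set_density :: "nat set set \<Rightarrow> nat set \<Rightarrow> real" where
  "set_density E S = real (card (induced_edges E S)) / real (card S)"

definition max_density :: "nat \<Rightarrow> nat set set \<Rightarrow> real" where
  "max_density n E = Max {set_density E S | S. S \<noteq> {} \<and> S \<subseteq> {0..<n}}"

definition edge_neighboring :: "nat \<Rightarrow> nat set set \<Rightarrow> nat set set \<Rightarrow> bool" where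
  "edge_neighboring n E E' \<longleftrightarrow> is_graph n E \<and> is_graph n E' \<and>
     card ((E - E') \<union> (E' - E)) = 1"

text \<open>A randomized algorithm maps (n, E) to a probability distribution on the reals.\<close>
definition valid_mechanism :: "(nat \<Rightarrow> nat set set \<Rightarrow> real measure) \<Rightarrow> bool" where
  "valid_mechanism A \<longleftrightarrow> (\<forall>n E. prob_space (A n E) \<and> sets (A n E) = sets borel)"

definition edge_dp :: "real \<Rightarrow> (nat \<Rightarrow> nat set set \<Rightarrow> real measure) \<Rightarrow> bool" where
  "edge_dp \<epsilon> A \<longleftrightarrow> (\<forall>n E E' S. edge_neighboring n E E' \<longrightarrow> S \<in> sets borel \<longrightarrow>
     measure (A n E) S \<le> exp \<epsilon> * measure (A n E') S)"

end

theory Submission imports Defs begin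

definition wt :: "real \<Rightarrow> real \<Rightarrow> real \<Rightarrow> real" where
  "wt a h y = exp (- a * \<bar>y - h\<bar>)"

definition Zs :: "real \<Rightarrow> real set \<Rightarrow> real \<Rightarrow> real" where
  "Zs a Y h = (\<Sum>z\<in>Y. wt a h z)"

definition fw :: "real \<Rightarrow> real set \<Rightarrow> real \<Rightarrow> real \<Rightarrow> real" where
  "fw a Y h y = (if y \<in> Y then wt a h y / Zs a Y h else 0)"

definition expm :: "real \<Rightarrow> real set \<Rightarrow> real \<Rightarrow> real pmf" where
  "expm a Y h = embed_pmf (fw a Y h)"

lemma Zs_pos: "finite Y \<Longrightarrow> Y \<noteq> {} \<Longrightarrow> Zs a Y h > 0"
  unfolding Zs_def wt_def by (simp add: sum_pos)

lemma fw_nonneg: "finite Y \<Longrightarrow> Y \<noteq> {} \<Longrightarrow> 0 \<le> fw a Y h x"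
  using Zs_pos[of Y a h] by (simp add: fw_def wt_def less_imp_le)

lemma fw_ok:
  assumes "finite Y" "Y \<noteq> {}"
  shows "(\<integral>\<^sup>+x. ennreal (fw a Y h x) \<partial>count_space UNIV) = 1"
proof -
  have "(\<integral>\<^sup>+x. ennreal (fw a Y h x) \<partial>count_space UNIV) = (\<Sum>x\<in>Y. ennreal (fw a Y h x))"
    by (rule nn_integral_count_space') (use assms in \<open>auto simp: fw_def\<close>)
  also have "\<dots> = ennreal (\<Sum>x\<in>Y. fw a Y h x)"
    using fw_nonneg[OF assms] by (intro sum_ennreal) auto
  also have "(\<Sum>x\<in>Y. fw a Y h x) = (\<Sum>x\<in>Y. wt a h x) / Zs a Y h"
    by (simp add: fw_def sum_divide_distrib)
  also have "\<dots> = 1" using Zs_pos[OF assms, of a h] by (simp add: Zs_def)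
  finally show ?thesis by simp
qed

lemma pmf_expm:
  assumes "finite Y" "Y \<noteq> {}"
  shows "pmf (expm a Y h) y = fw a Y h y"
  unfolding expm_def by (rule pmf_embed_pmf[of "fw a Y h", OF fw_nonneg[OF assms] fw_ok[OF assms]])

lemma measure_expm:
  assumes "finite Y" "Y \<noteq> {}"
  shows "measure (measure_pmf (expm a Y h)) S = (\<Sum>y\<in>S \<inter> Y. fw a Y h y)"
proof -
  have "set_pmf (expm a Y h) \<subseteq> Y"
  proof
    fix y assume "y \<in> set_pmf (expm a Y h)"
    hence "pmf (expm a Y h) y \<noteq> 0" by (simp add: set_pmf_iff)
    hence "fw a Y h y \<noteq> 0" by (metis pmf_expm[OF assms])
    thus "y \<in> Y" by (simp add: fw_def split: if_splits)
  qed
  hence "measure (measure_pmf (expm a Y h)) S = measure (measure_pmf (expm a Y h)) (S \<inter> Y)"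
  proof -
    assume sub: "set_pmf (expm a Y h) \<subseteq> Y"
    have e: "S \<inter> set_pmf (expm a Y h) = (S \<inter> Y) \<inter> set_pmf (expm a Y h)" using sub by blast
    have "measure (measure_pmf (expm a Y h)) S = measure (measure_pmf (expm a Y h)) (S \<inter> set_pmf (expm a Y h))"
      by (rule measure_Int_set_pmf[symmetric])
    also have "\<dots> = measure (measure_pmf (expm a Y h)) (S \<inter> Y)"
      unfolding e by (rule measure_Int_set_pmf)
    finally show ?thesis .
  qed
  also have "\<dots> = (\<Sum>y\<in>S \<inter> Y. fw a Y h y)"
    using assms by (subst measure_measure_pmf_finite) (auto intro!: sum.cong pmf_expm)
  finally show ?thesis .
qed

lemma wt_shift:
  assumes "\<bar>h - h'\<bar> \<le> d" "a \<ge> 0"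
  shows "wt a h y \<le> exp (a * d) * wt a h' y"
proof -
  have "\<bar>y - h'\<bar> \<le> \<bar>y - h\<bar> + d" using assms by linarith
  hence "a * \<bar>y - h'\<bar> \<le> a * (\<bar>y - h\<bar> + d)" using assms(2)
    by (rule mult_left_mono)
  hence "- a * \<bar>y - h\<bar> \<le> a * d + - a * \<bar>y - h'\<bar>" by (simp add: algebra_simps)
  hence "exp (- a * \<bar>y - h\<bar>) \<le> exp (a * d + - a * \<bar>y - h'\<bar>)" by (simp only: exp_le_cancel_iff)
  thus ?thesis unfolding wt_def exp_add .
qed

lemma fw_dp:
  assumes "finite Y" "Y \<noteq> {}" "\<bar>h - h'\<bar> \<le> d" "a \<ge> 0"
  shows "fw a Y h y \<le> exp (2 * a * d) * fw a Y h' y"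
proof (cases "y \<in> Y")
  case True
  have Z1: "Zs a Y h' \<le> exp (a * d) * Zs a Y h"
    unfolding Zs_def sum_distrib_left
    by (rule sum_mono, rule wt_shift) (use assms in auto)
  have w: "wt a h y \<le> exp (a * d) * wt a h' y" by (rule wt_shift) (use assms in auto)
  have p1: "Zs a Y h > 0" "Zs a Y h' > 0" using Zs_pos assms by auto
  have "wt a h y / Zs a Y h \<le> exp (a * d) * wt a h' y / (Zs a Y h' / exp (a*d))"
  proof (rule frac_le)
    show "0 \<le> exp (a * d) * wt a h' y" by (simp add: wt_def)
    show "0 < Zs a Y h' / exp (a * d)" using p1 by simp
    show "Zs a Y h' / exp (a * d) \<le> Zs a Y h" using Z1 by (simp add: divide_le_eq mult.commute)
  qed (rule w)
  also have "\<dots> = exp (2 * a * d) * (wt a h' y / Zs a Y h')"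
  proof -
    have "exp (2 * a * d) = exp (a*d + a*d)" by (simp add: algebra_simps)
    also have "\<dots> = exp (a*d) * exp (a*d)" by (rule exp_add)
    finally have "exp (2 * a * d) = exp (a*d) * exp (a*d)" .
    thus ?thesis using p1 by simp
  qed
  finally show ?thesis using True by (simp add: fw_def)
qed (simp add: fw_def)

lemma tail_expm:
  assumes "finite Y" "y0 \<in> Y" "\<bar>y0 - h\<bar> \<le> 1" "a \<ge> 0"
  shows "measure (measure_pmf (expm a Y h)) {y. r \<le> \<bar>y - h\<bar>} \<le> real (card Y) * exp (- a * r) * exp a"
proof -
  have ne: "Y \<noteq> {}" using assms by auto
  have Z: "Zs a Y h \<ge> exp (- a)"
  proof -
    have "exp (- a) \<le> wt a h y0" unfolding wt_def using assms(3,4)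
      by (simp add: mult_left_le)
    also have "\<dots> \<le> Zs a Y h" unfolding Zs_def
      by (rule member_le_sum) (use assms in \<open>auto simp: wt_def\<close>)
    finally show ?thesis .
  qed
  have "measure (measure_pmf (expm a Y h)) {y. r \<le> \<bar>y - h\<bar>} = (\<Sum>y\<in>{y. r \<le> \<bar>y - h\<bar>} \<inter> Y. fw a Y h y)"
    by (rule measure_expm[OF assms(1) ne])
  also have "\<dots> \<le> (\<Sum>y\<in>{y. r \<le> \<bar>y - h\<bar>} \<inter> Y. exp (- a * r) * exp a)"
  proof (rule sum_mono)
    fix y assume y: "y \<in> {y. r \<le> \<bar>y - h\<bar>} \<inter> Y"
    have "wt a h y \<le> exp (- a * r)" unfolding wt_def using y assms(4)
      by (simp add: mult_left_mono)
    have "fw a Y h y = wt a h y / Zs a Y h" using y by (simp add: fw_def)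
    also have "\<dots> \<le> exp (- a * r) / exp (- a)"
      by (rule frac_le) (use Z \<open>wt a h y \<le> exp (- a * r)\<close> in \<open>auto simp: wt_def\<close>)
    also have "\<dots> = exp (- a * r) * exp a" by (simp add: exp_minus field_simps)
    finally show "fw a Y h y \<le> exp (- a * r) * exp a" .
  qed
  also have "\<dots> \<le> (\<Sum>y\<in>Y. exp (- a * r) * exp a)"
    by (rule sum_mono2[OF assms(1)]) auto
  also have "\<dots> = real (card Y) * exp (- a * r) * exp a" by simp
  finally show ?thesis .
qed


lemma finite_all_edges: "finite (all_edges n)"
proof -
  have "all_edges n \<subseteq> Pow {0..<n}" by (auto simp: all_edges_def)
  thus ?thesis by (rule finite_subset) simp
qed

lemma graph_finite: "is_graph n E \<Longrightarrow> finite E"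
  using finite_all_edges finite_subset is_graph_def by blast

lemma card_induced_le:
  assumes "is_graph n E" "finite S"
  shows "2 * card (induced_edges E S) \<le> card S * (card S - 1)"
proof -
  have "induced_edges E S \<subseteq> {B. B \<subseteq> S \<and> card B = 2}"
    using assms(1) by (auto simp: induced_edges_def is_graph_def all_edges_def)
  hence "card (induced_edges E S) \<le> card {B. B \<subseteq> S \<and> card B = 2}"
    by (rule card_mono[rotated]) (use assms(2) in simp)
  also have "\<dots> = card S choose 2" by (rule n_subsets[OF assms(2)])
  also have "\<dots> = card S * (card S - 1) div 2" by (rule choose_two)
  finally show ?thesis by linarith
qed

lemma density_le:
  assumes "is_graph n E" "finite S" "S \<noteq> {}"
  shows "set_density E S \<le> (real (card S) - 1) / 2"
proof -
  have c: "card S \<ge> 1" using assms by (simp add: Suc_le_eq card_gt_0_iff)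
  have "2 * real (card (induced_edges E S)) \<le> real (card S) * (real (card S) - 1)"
    using card_induced_le[OF assms(1,2)] c
    by (metis (mono_tags, lifting) of_nat_1 of_nat_diff of_nat_le_iff of_nat_mult of_nat_numeral)
  thus ?thesis using c unfolding set_density_def
    by (simp add: divide_le_eq field_simps)
qed

lemma density_nonneg: "set_density E S \<ge> 0"
  by (simp add: set_density_def)

lemma neighbor_sym: "edge_neighboring n E E' \<Longrightarrow> edge_neighboring n E' E"
  by (simp add: edge_neighboring_def Un_commute)

lemma neighbor_card:
  assumes "edge_neighboring n E E'"
  shows "real (card (induced_edges E S)) \<le> real (card (induced_edges E' S)) + 1"
proof -
  have g: "is_graph n E" "is_graph n E'" and c: "card ((E - E') \<union> (E' - E)) = 1"
    using assms by (auto simp: edge_neighboring_def)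
  have f: "finite E" "finite E'" using g graph_finite by auto
  have "induced_edges E S \<subseteq> induced_edges E' S \<union> (E - E')"
    by (auto simp: induced_edges_def)
  hence "card (induced_edges E S) \<le> card (induced_edges E' S \<union> (E - E'))"
    by (rule card_mono[rotated]) (use f in \<open>simp add: induced_edges_def\<close>)
  also have "\<dots> \<le> card (induced_edges E' S) + card (E - E')" by (rule card_Un_le)
  also have "card (E - E') \<le> card ((E - E') \<union> (E' - E))"
    by (rule card_mono) (use f in auto)
  finally show ?thesis using c by simp
qed

lemma neighbor_density:
  assumes "edge_neighboring n E E'" "card S \<ge> k" "k \<ge> 1"
  shows "set_density E S \<le> set_density E' S + 1 / real k"
proof -
  have "set_density E S \<le> (real (card (induced_edges E' S)) + 1) / real (card S)"
    unfolding set_density_def by (rule divide_right_mono[OF neighbor_card[OF assms(1)]]) simp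
  also have "\<dots> = set_density E' S + 1 / real (card S)"
    by (simp add: set_density_def add_divide_distrib)
  also have "1 / real (card S) \<le> 1 / real k" using assms(2,3)
    by (intro divide_left_mono) auto
  finally show ?thesis by simp
qed

definition FF :: "nat \<Rightarrow> nat \<Rightarrow> nat set set" where
  "FF n k = {S. S \<subseteq> {0..<n} \<and> S \<noteq> {} \<and> k \<le> card S}"

definition hk :: "nat \<Rightarrow> nat \<Rightarrow> nat set set \<Rightarrow> real" where
  "hk n k E = Max (set_density E ` FF n k \<union> {0})"

lemma finite_FF: "finite (FF n k)"
  by (rule finite_subset[of _ "Pow {0..<n}"]) (auto simp: FF_def)

lemma hk_sens1:
  assumes "edge_neighboring n E E'" "k \<ge> 1"
  shows "hk n k E \<le> hk n k E' + 1 / real k"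
  unfolding hk_def
proof (subst Max_le_iff)
  let ?M = "Max (set_density E' ` FF n k \<union> {0})"
  have fin: "finite (set_density E' ` FF n k \<union> {0})" using finite_FF by simp
  have m0: "0 \<le> ?M" by (rule Max_ge[OF fin]) simp
  show "\<forall>a\<in>set_density E ` FF n k \<union> {0}. a \<le> ?M + 1 / real k"
  proof
    fix x assume "x \<in> set_density E ` FF n k \<union> {0}"
    then consider "x = 0" | S where "S \<in> FF n k" "x = set_density E S" by auto
    thus "x \<le> ?M + 1 / real k"
    proof cases
      case 1 thus ?thesis using m0 by simp
    next
      case 2
      have "x \<le> set_density E' S + 1 / real k"
        using 2 neighbor_density[OF assms(1) _ assms(2)] by (auto simp: FF_def)
      also have "set_density E' S \<le> ?M" by (rule Max_ge[OF fin]) (use 2 in auto)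
      finally show ?thesis by simp
    qed
  qed
qed (use finite_FF in auto)

lemma hk_sens:
  assumes "edge_neighboring n E E'" "k \<ge> 1"
  shows "\<bar>hk n k E - hk n k E'\<bar> \<le> 1 / real k"
  using hk_sens1[OF assms] hk_sens1[OF neighbor_sym[OF assms(1)] assms(2)] by linarith

lemma hk_bounds:
  assumes "is_graph n E" "n \<ge> 1" "k \<ge> 1"
  shows "0 \<le> hk n k E" "hk n k E \<le> real n"
    "hk n k E \<le> max_density n E" "max_density n E \<le> hk n k E + (real k - 1) / 2"
proof -
  have fin: "finite (set_density E ` FF n k \<union> {0})" using finite_FF by simp
  let ?D = "{set_density E S | S. S \<noteq> {} \<and> S \<subseteq> {0..<n}}"
  have Deq: "?D = set_density E ` {S. S \<noteq> {} \<and> S \<subseteq> {0..<n}}" by auto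
  have finD: "finite ?D" unfolding Deq
    by (rule finite_imageI, rule finite_subset[of _ "Pow {0..<n}"]) auto
  have "{0} \<noteq> {} \<and> {0} \<subseteq> {0..<n}" using assms(2) by auto
  hence neD: "?D \<noteq> {}" by blast
  show h0: "0 \<le> hk n k E" unfolding hk_def by (rule Max_ge[OF fin]) simp
  show "hk n k E \<le> real n" unfolding hk_def
  proof (subst Max_le_iff[OF fin])
    show "\<forall>a\<in>set_density E ` FF n k \<union> {0}. a \<le> real n"
    proof
      fix x assume "x \<in> set_density E ` FF n k \<union> {0}"
      then consider "x = 0" | S where "S \<in> FF n k" "x = set_density E S" by auto
      thus "x \<le> real n"
      proof cases
        case 2
        have fS: "finite S" "S \<noteq> {}" using 2 finite_subset by (auto simp: FF_def)
        have "card S \<le> n" using 2 card_mono[of "{0..<n}" S] by (auto simp: FF_def)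
        thus ?thesis using 2 density_le[OF assms(1) fS] by simp
      qed simp
    qed
  qed simp
  have d0: "0 \<le> max_density n E" unfolding max_density_def
    by (rule order_trans[OF density_nonneg[of E "{0}"]], rule Max_ge[OF finD])
      (use assms(2) in auto)
  show "hk n k E \<le> max_density n E" unfolding hk_def
  proof (subst Max_le_iff[OF fin])
    show "\<forall>a\<in>set_density E ` FF n k \<union> {0}. a \<le> max_density n E"
    proof
      fix x assume "x \<in> set_density E ` FF n k \<union> {0}"
      then consider "x = 0" | S where "S \<in> FF n k" "x = set_density E S" by auto
      thus "x \<le> max_density n E"
      proof cases
        case 2
        show ?thesis unfolding max_density_def 2 by (rule Max_ge[OF finD]) (use 2 in \<open>auto simp: FF_def\<close>)
      qed (use d0 in simp)
    qed
  qed simp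
  obtain S where S: "S \<noteq> {}" "S \<subseteq> {0..<n}" "max_density n E = set_density E S"
    using Max_in[OF finD neD] unfolding max_density_def by auto
  have fS: "finite S" using S finite_subset by blast
  show "max_density n E \<le> hk n k E + (real k - 1) / 2"
  proof (cases "k \<le> card S")
    case True
    hence "set_density E S \<le> hk n k E" unfolding hk_def
      by (intro Max_ge[OF fin]) (use S in \<open>auto simp: FF_def\<close>)
    moreover have "(real k - 1) / 2 \<ge> 0" using assms(3) by simp
    ultimately show ?thesis using S by linarith
  next
    case False
    have "set_density E S \<le> (real (card S) - 1) / 2" by (rule density_le[OF assms(1) fS S(1)])
    also have "\<dots> \<le> (real k - 1) / 2" using False by simp
    finally have "set_density E S \<le> (real k - 1) / 2" .
    thus ?thesis using S h0 by linarith
  qed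
qed


definition kk :: "real \<Rightarrow> nat \<Rightarrow> nat" where
  "kk \<epsilon> n = max 1 (nat \<lceil>sqrt (ln (real n) / \<epsilon>)\<rceil>)"

definition Yn :: "nat \<Rightarrow> real set" where
  "Yn n = real ` {0..n}"

definition pm :: "real \<Rightarrow> nat \<Rightarrow> nat set set \<Rightarrow> real pmf" where
  "pm \<epsilon> n E = expm (\<epsilon> * real (kk \<epsilon> n) / 2) (Yn n) (hk n (kk \<epsilon> n) E)"

definition mech :: "real \<Rightarrow> nat \<Rightarrow> nat set set \<Rightarrow> real measure" where
  "mech \<epsilon> n E = distr (measure_pmf (pm \<epsilon> n E)) borel id"

lemma Yn_fin: "finite (Yn n)" "Yn n \<noteq> {}"
  by (auto simp: Yn_def)

lemma mech_measure: "S \<in> sets borel \<Longrightarrow> measure (mech \<epsilon> n E) S = measure (measure_pmf (pm \<epsilon> n E)) S"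
  unfolding mech_def by (subst measure_distr) auto

lemma mech_valid: "valid_mechanism (mech \<epsilon>)"
  unfolding valid_mechanism_def mech_def
  by (auto intro!: prob_space.prob_space_distr prob_space_measure_pmf)

lemma mech_dp:
  assumes "0 < \<epsilon>"
  shows "edge_dp \<epsilon> (mech \<epsilon>)"
  unfolding edge_dp_def
proof (intro allI impI)
  fix n E E' and S :: "real set"
  assume nb: "edge_neighboring n E E'" and S: "S \<in> sets borel"
  let ?k = "kk \<epsilon> n" let ?a = "\<epsilon> * real (kk \<epsilon> n) / 2"
  have k1: "?k \<ge> 1" by (simp add: kk_def)
  have a0: "?a \<ge> 0" using assms by simp
  have sens: "\<bar>hk n ?k E - hk n ?k E'\<bar> \<le> 1 / real ?k" by (rule hk_sens[OF nb k1])
  have e: "2 * ?a * (1 / real ?k) = \<epsilon>" using k1 by simp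
  have "measure (mech \<epsilon> n E) S = (\<Sum>y\<in>S \<inter> Yn n. fw ?a (Yn n) (hk n ?k E) y)"
    using mech_measure[OF S] measure_expm[OF Yn_fin] by (simp add: pm_def)
  also have "\<dots> \<le> (\<Sum>y\<in>S \<inter> Yn n. exp \<epsilon> * fw ?a (Yn n) (hk n ?k E') y)"
    by (rule sum_mono) (use fw_dp[OF Yn_fin sens a0] e in metis)
  also have "\<dots> = exp \<epsilon> * measure (mech \<epsilon> n E') S"
    using mech_measure[OF S] measure_expm[OF Yn_fin] by (simp add: pm_def sum_distrib_left)
  finally show "measure (mech \<epsilon> n E) S \<le> exp \<epsilon> * measure (mech \<epsilon> n E') S" .
qed

lemma mech_acc:
  assumes "0 < \<epsilon>" "\<epsilon> \<le> 1" "n \<ge> 3" "is_graph n E"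
  shows "measure (mech \<epsilon> n E) {x. \<bar>x - max_density n E\<bar> \<le> 8 * sqrt (ln (real n) / \<epsilon>)} \<ge> 1 - 1 / real n"
proof -
  define t where "t = sqrt (ln (real n) / \<epsilon>)"
  define k where "k = kk \<epsilon> n"
  define a where "a = \<epsilon> * real k / 2"
  define h where "h = hk n k E"
  define \<rho> where "\<rho> = max_density n E"
  define r where "r = 1 + 6 * ln (real n) / (\<epsilon> * real k)"
  have ln3: "ln (real n) \<ge> 1"
  proof -
    have "(3::real) \<le> real n" using assms(3) by simp
    hence "exp 1 \<le> real n" using exp_le by linarith
    hence "ln (exp 1) \<le> ln (real n)" using assms(3) by (subst ln_le_cancel_iff) auto
    thus ?thesis by simp
  qed
  have "ln (real n) / \<epsilon> \<ge> 1" using assms ln3 by (simp add: le_divide_eq)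
  hence t1: "t \<ge> 1" unfolding t_def using real_sqrt_ge_one by blast
  have tt: "t * t = ln (real n) / \<epsilon>"
  proof -
    have "t * t = \<bar>ln (real n) / \<epsilon>\<bar>" unfolding t_def by (rule real_sqrt_mult_self)
    also have "\<dots> = ln (real n) / \<epsilon>" by (rule abs_of_nonneg) (use \<open>ln (real n) / \<epsilon> \<ge> 1\<close> in linarith)
    finally show ?thesis .
  qed
  have kt: "real k \<ge> t" "real k \<le> t + 1" using t1 unfolding k_def kk_def t_def[symmetric]
    by (auto simp: max_def of_nat_nat) (linarith+)
  have k1: "k \<ge> 1" by (simp add: k_def kk_def)
  have n1: "n \<ge> 1" using assms by simp
  note hb = hk_bounds[OF assms(4) n1 k1, folded h_def \<rho>_def]
  have r7: "r \<le> 7 * t"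
  proof -
    have ln_eq: "ln (real n) = \<epsilon> * (t * t)" using tt assms(1) by (simp add: field_simps)
    have "6 * ln (real n) / (\<epsilon> * real k) = 6 * (t * t) / real k" unfolding ln_eq using assms(1) by simp
    also have "\<dots> \<le> 6 * (t * t) / t" using kt t1 by (intro divide_left_mono) auto
    also have "\<dots> = 6 * t" using t1 by simp
    finally show ?thesis unfolding r_def using t1 by linarith
  qed
  let ?G = "{x. \<bar>x - \<rho>\<bar> \<le> 8 * t}"
  have sub: "UNIV - ?G \<subseteq> {y. r \<le> \<bar>y - h\<bar>}"
  proof
    fix x assume "x \<in> UNIV - ?G"
    hence "\<bar>x - \<rho>\<bar> > 8 * t" by simp
    moreover have "\<bar>\<rho> - h\<bar> \<le> t / 2"
    proof -
      have a1: "\<rho> \<le> h + (real k - 1) / 2" by (rule hb(4))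
      have a2: "h \<le> \<rho>" by (rule hb(3))
      have a3: "(real k - 1) / 2 \<le> t / 2" using kt(2) by (intro divide_right_mono) auto
      have "\<rho> - h \<le> t / 2" using a1 a3 by linarith
      thus ?thesis using a2 by simp
    qed
    moreover have "\<bar>x - \<rho>\<bar> \<le> \<bar>x - h\<bar> + \<bar>\<rho> - h\<bar>"
      using abs_triangle_ineq[of "x - h" "h - \<rho>"] by (simp add: abs_minus_commute)
    ultimately have "r \<le> \<bar>x - h\<bar>" using r7 t1 by linarith
    thus "x \<in> {y. r \<le> \<bar>y - h\<bar>}" by simp
  qed
  have y0: "real (nat \<lfloor>h\<rfloor>) \<in> Yn n" "\<bar>real (nat \<lfloor>h\<rfloor>) - h\<bar> \<le> 1"
  proof -
    have f0: "0 \<le> \<lfloor>h\<rfloor>" using hb(1) by simp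
    have fn: "\<lfloor>h\<rfloor> \<le> int n" using hb(2) by (simp add: floor_le_iff)
    have rm: "real (nat \<lfloor>h\<rfloor>) = real_of_int \<lfloor>h\<rfloor>" using f0 by simp
    have "nat \<lfloor>h\<rfloor> \<in> {0..n}" using fn by simp
    thus "real (nat \<lfloor>h\<rfloor>) \<in> Yn n" unfolding Yn_def by (rule imageI)
    have "real_of_int \<lfloor>h\<rfloor> \<le> h" "h < real_of_int \<lfloor>h\<rfloor> + 1" by simp_all
    thus "\<bar>real (nat \<lfloor>h\<rfloor>) - h\<bar> \<le> 1" unfolding rm by linarith
  qed
  have a0: "a \<ge> 0" using assms by (simp add: a_def)
  have cardY: "card (Yn n) = n + 1" unfolding Yn_def by (simp add: card_image)
  have ar: "a * (r - 1) = 3 * ln (real n)" using k1 assms(1) by (simp add: a_def r_def field_simps)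
  have "measure (measure_pmf (pm \<epsilon> n E)) (UNIV - ?G) \<le> measure (measure_pmf (pm \<epsilon> n E)) {y. r \<le> \<bar>y - h\<bar>}"
    by (rule measure_pmf.finite_measure_mono[OF sub]) simp
  also have "\<dots> \<le> real (card (Yn n)) * exp (- a * r) * exp a"
    unfolding pm_def k_def[symmetric] a_def[symmetric] h_def[symmetric]
    by (rule tail_expm[OF Yn_fin(1) y0 a0])
  finally have b1: "measure (measure_pmf (pm \<epsilon> n E)) (UNIV - ?G) \<le> real (card (Yn n)) * (exp (- a * r) * exp a)"
    by (simp add: mult.assoc)
  have e1: "exp (- a * r) * exp a = exp (- (a * (r - 1)))"
    by (simp add: exp_add[symmetric] algebra_simps)
  have e2: "exp (- (a * (r - 1))) = 1 / real n ^ 3"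
  proof -
    have "3 * ln (real n) = ln (real n ^ 3)" using n1 by (simp add: ln_realpow)
    hence "exp (3 * ln (real n)) = real n ^ 3" using n1 by simp
    thus ?thesis unfolding ar by (simp add: exp_minus divide_inverse)
  qed
  have bad: "measure (measure_pmf (pm \<epsilon> n E)) (UNIV - ?G) \<le> real (n + 1) * (1 / real n ^ 3)"
    using b1 unfolding e1 e2 cardY .
  have "real (n + 1) * (1 / real n ^ 3) \<le> 1 / real n"
  proof -
    have "3 * n \<le> n * n" using assms(3) by (rule mult_right_mono) simp
    hence "n + 1 \<le> n * n" using assms(3) by linarith
    hence "real (n + 1) \<le> real (n * n)" by (simp only: of_nat_le_iff)
    hence "real (n + 1) \<le> real n * real n" by simp
    hence "real n * real (n + 1) \<le> real n * (real n * real n)" by (rule mult_left_mono) simp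
    hence "real n + real n * real n \<le> real n * (real n * real n)" by (simp add: algebra_simps)
    thus ?thesis using n1 by (simp add: field_simps power3_eq_cube)
  qed
  with bad have "measure (measure_pmf (pm \<epsilon> n E)) (UNIV - ?G) \<le> 1 / real n" by linarith
  hence "measure (measure_pmf (pm \<epsilon> n E)) ?G \<ge> 1 - 1 / real n"
    using measure_pmf.prob_compl[of ?G "pm \<epsilon> n E"] by simp
  moreover have "?G \<in> sets borel" by measurable
  ultimately show ?thesis using mech_measure unfolding t_def \<rho>_def by metis
qed

theorem mainTheorem14:
  shows "\<exists>C::real. \<forall>\<epsilon>::real. 0 < \<epsilon> \<and> \<epsilon> \<le> 1 \<longrightarrow>
     (\<exists>A. valid_mechanism A \<and> edge_dp \<epsilon> A \<and>
        (\<forall>n E. n \<ge> 3 \<longrightarrow> is_graph n E \<longrightarrow>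
           measure (A n E) {x. \<bar>x - max_density n E\<bar> \<le> C * sqrt (ln (real n) / \<epsilon>)}
             \<ge> 1 - 1 / real n))"
  by (intro exI[of _ 8] allI impI, rule exI[of _ "mech _"])
    (auto intro: mech_valid mech_dp mech_acc)

end
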